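(* Let $G$ be a graph with vertex set $V$ and let $S,T$ be disjoint subsets of $V$. Then there exist a graph $G'$ on $V$ with $d_{G'}(v)=d_G(v)$ for all $v\in V$, and disjoint subsets $S',T'\subseteq V$ with $|S'|=|S|$ and $|T'|=|T|$, such that $d_{G'}(s)\le d_{G'}(v)$ for all $s\in S'$ and $v\in V\setminus S'$, $d_{G'}(t)\ge d_{G'}(v)$ for all $t\in T'$ and $v\in V\setminus T'$, and \[|E_{G'}(S';V\setminus T')|\le|E_G(S;V\setminus T)|.\]
   Context: All graphs are finite and simple; $d_G(v)$ is the degree of $v$ in $G$. For disjoint $S,T\subseteq V$, $E_G(S;V\setminus T)$ denotes the set of edges of $G$ that either have both endpoints in $S$, or have one endpoint in $S$ and the other in $V\setminus(S\cup T)$. *)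

theory Defs
  imports Main
begin

definition simple_graph :: "'a set \<Rightarrow> 'a set set \<Rightarrow> bool" where
  "simple_graph V E \<longleftrightarrow> finite V \<and> (\<forall>e\<in>E. \<exists>x y. x \<in> V \<and> y \<in> V \<and> x \<noteq> y \<and> e = {x, y})"

definition degree :: "'a set set \<Rightarrow> 'a \<Rightarrow> nat" where
  "degree E v = card {e \<in> E. v \<in> e}"

text \<open>E_G(S; V minus T): edges with both endpoints in S, or one endpoint in S and
  the other in V minus (S union T).\<close>
definition edges_ST :: "'a set \<Rightarrow> 'a set set \<Rightarrow> 'a set \<Rightarrow> 'a set \<Rightarrow> 'a set set" where
  "edges_ST V E S T = {e \<in> E. (\<exists>x y. e = {x, y} \<and> x \<in> S \<and> y \<in> S) \<or>
       (\<exists>x y. e = {x, y} \<and> x \<in> S \<and> y \<in> V - (S \<union> T))}"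

end

theory Submission imports Defs begin

definition sw :: "'a \<Rightarrow> 'a \<Rightarrow> 'a \<Rightarrow> 'a" where
  "sw a b x = (if x = a then b else if x = b then a else x)"

lemma sw_sw[simp]: "sw a b (sw a b x) = x" by (simp add: sw_def)
lemma inj_sw: "inj (sw a b)" by (metis injI sw_sw)
lemma sw_image_V: "a \<in> V \<Longrightarrow> b \<in> V \<Longrightarrow> sw a b ` V = V"
  unfolding sw_def by (auto simp: image_iff)

definition cntset :: "'a set set \<Rightarrow> 'a set \<Rightarrow> 'a set \<Rightarrow> 'a set set" where
  "cntset E S T = {e\<in>E. e \<inter> S \<noteq> {} \<and> e \<inter> T = {}}"

lemma ex_pair: "(\<exists>u w. {x,y} = {u,w} \<and> P u w) = (P x y \<or> P y x)"
  by (auto simp: doubleton_eq_iff)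

lemma edges_ST_eq:
  assumes "simple_graph V E" "S \<inter> T = {}"
  shows "edges_ST V E S T = cntset E S T"
proof -
  have "e \<in> edges_ST V E S T \<longleftrightarrow> e \<in> cntset E S T" for e
  proof (cases "e \<in> E")
    case True
    then obtain x y where xy: "x \<in> V" "y \<in> V" "x \<noteq> y" "e = {x,y}" using assms(1) unfolding simple_graph_def by blast
    have "e \<in> edges_ST V E S T \<longleftrightarrow> (x\<in>S \<and> y\<in>S \<or> y\<in>S \<and> x\<in>S \<or> (x\<in>S \<and> y\<in>V-(S\<union>T)) \<or> (y\<in>S \<and> x\<in>V-(S\<union>T)))"
      unfolding edges_ST_def xy(4) using True xy(4) by (simp add: ex_pair disj_assoc)
    moreover have "e \<in> cntset E S T \<longleftrightarrow> (x\<in>S \<or> y\<in>S) \<and> x\<notin>T \<and> y\<notin>T"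
      unfolding cntset_def using True xy(4) by auto
    ultimately show ?thesis using xy(1,2) assms(2) by blast
  qed (simp add: edges_ST_def cntset_def)
  then show ?thesis by blast
qed

lemma finite_E: "simple_graph V E \<Longrightarrow> finite E"
proof -
  assume a: "simple_graph V E"
  have "E \<subseteq> Pow V"
  proof
    fix e assume "e \<in> E"
    then obtain x y where "x \<in> V" "y \<in> V" "e = {x,y}" using a unfolding simple_graph_def by blast
    then show "e \<in> Pow V" by simp
  qed
  moreover have "finite V" using a unfolding simple_graph_def by blast
  ultimately show ?thesis by (simp add: finite_subset)
qed

lemma degree_nbr: "simple_graph V E \<Longrightarrow> degree E v = card {x. {v,x} \<in> E}"
proof -
  assume a: "simple_graph V E"
  have "{e\<in>E. v \<in> e} = (\<lambda>x. {v,x}) ` {x. {v,x} \<in> E}"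
  proof
    show "{e\<in>E. v \<in> e} \<subseteq> (\<lambda>x. {v,x}) ` {x. {v,x} \<in> E}"
    proof
      fix e assume "e \<in> {e\<in>E. v \<in> e}"
      then obtain x y where "e = {x,y}" "e \<in> E" "v \<in> e" using a unfolding simple_graph_def by blast
      then show "e \<in> (\<lambda>x. {v,x}) ` {x. {v,x} \<in> E}" by (auto simp: insert_commute)
    qed
  qed auto
  moreover have "inj_on (\<lambda>x. {v,x}) X" for X by (auto simp: inj_on_def doubleton_eq_iff)
  ultimately show ?thesis unfolding degree_def by (simp add: card_image)
qed

lemma relabel_graph:
  assumes g: "simple_graph V E" and ab: "a \<in> V" "b \<in> V"
  shows "simple_graph V ((`) (sw a b) ` E)"
  unfolding simple_graph_def
proof (intro conjI ballI)
  show "finite V" using g unfolding simple_graph_def by blast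
  fix e assume "e \<in> (`) (sw a b) ` E"
  then obtain e0 where e0: "e0 \<in> E" "e = sw a b ` e0" by blast
  then obtain x y where xy: "x \<in> V" "y \<in> V" "x \<noteq> y" "e0 = {x,y}" using g unfolding simple_graph_def by blast
  have sV: "v \<in> V \<Longrightarrow> sw a b v \<in> V" for v using ab by (simp add: sw_def)
  have "sw a b x \<noteq> sw a b y" using xy(3) by (simp add: inj_eq[OF inj_sw])
  then show "\<exists>x y. x \<in> V \<and> y \<in> V \<and> x \<noteq> y \<and> e = {x, y}"
    using e0(2) xy sV by auto
qed

lemma inj_img: "inj ((`) (sw a b))"
  unfolding inj_def by (simp add: inj_image_eq_iff[OF inj_sw])

lemma inj_on_img: "inj_on ((`) (sw a b)) A"
  using inj_img by (rule inj_on_subset) simp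

lemma mem_sw_image: "y \<in> sw a b ` X \<longleftrightarrow> sw a b y \<in> X"
  by (metis image_iff sw_sw)

lemma relabel_degree:
  "degree ((`) (sw a b) ` E) x = degree E (sw a b x)"
proof -
  have g: "{e' \<in> f ` E. P e'} = f ` {e\<in>E. P (f e)}" for f :: "'a set \<Rightarrow> 'a set" and P by auto
  have "{e \<in> (`) (sw a b) ` E. x \<in> e} = (`) (sw a b) ` {e\<in>E. sw a b x \<in> e}"
    unfolding g mem_sw_image ..
  then show ?thesis unfolding degree_def
    using card_image[OF inj_on_img] by simp
qed

lemma relabel_cnt:
  "card (cntset ((`) (sw a b) ` E) (sw a b ` S) (sw a b ` T)) = card (cntset E S T)"
proof -
  have "cntset ((`) (sw a b) ` E) (sw a b ` S) (sw a b ` T) = (`) (sw a b) ` cntset E S T"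
  proof -
    have h: "sw a b ` e \<inter> sw a b ` X = sw a b ` (e \<inter> X)" for e X by (simp add: image_Int inj_sw)
    have g: "{e' \<in> f ` E. P e'} = f ` {e\<in>E. P (f e)}" for f :: "'a set \<Rightarrow> 'a set" and P by auto
    show ?thesis unfolding cntset_def g h by simp
  qed
  then show ?thesis using card_image[OF inj_on_img] by simp
qed


lemma edge_ne: "simple_graph V H \<Longrightarrow> {u,w} \<in> H \<Longrightarrow> u \<noteq> w \<and> u \<in> V \<and> w \<in> V"
proof -
  assume g: "simple_graph V H" and e: "{u,w} \<in> H"
  then obtain x y where "x \<in> V" "y \<in> V" "x \<noteq> y" "{u,w} = {x,y}" unfolding simple_graph_def by blast
  then show ?thesis by (auto simp: doubleton_eq_iff)
qed

definition Av :: "'a set set \<Rightarrow> 'a \<Rightarrow> 'a \<Rightarrow> 'a set" where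
  "Av H p q = {x. {p,x} \<in> H \<and> {q,x} \<notin> H \<and> x \<noteq> q}"

lemma nbr_finite:
  assumes g: "simple_graph V H" shows "finite {x. {q,x} \<in> H}"
proof -
  have "{x. {q,x} \<in> H} \<subseteq> V"
  proof
    fix x assume "x \<in> {x. {q,x} \<in> H}"
    then show "x \<in> V" using edge_ne[OF g] by simp
  qed
  moreover have "finite V" using g unfolding simple_graph_def by simp
  ultimately show ?thesis by (rule finite_subset)
qed

lemma Av_finite: "simple_graph V H \<Longrightarrow> finite (Av H p q)"
  unfolding Av_def by (rule finite_subset[OF _ nbr_finite[of V H p]]) auto

lemma av_card:
  assumes g: "simple_graph V H" and "p \<noteq> q"
  shows "degree H p - degree H q \<le> card (Av H p q)"
proof -
  let ?Np = "{x. {p,x} \<in> H}" and ?Nq = "{x. {q,x} \<in> H}"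
  have finp: "finite ?Np" and finq: "finite ?Nq" using nbr_finite[OF g] by auto
  have split: "?Np - {q} \<subseteq> Av H p q \<union> (?Nq - {p})"
  proof
    fix x assume x: "x \<in> ?Np - {q}"
    then have "{p,x} \<in> H" "x \<noteq> q" by auto
    moreover have "x \<noteq> p" using edge_ne[OF g \<open>{p,x} \<in> H\<close>] by auto
    ultimately show "x \<in> Av H p q \<union> (?Nq - {p})" unfolding Av_def by auto
  qed
  have "card (?Np - {q}) \<le> card (Av H p q \<union> (?Nq - {p}))"
    using split Av_finite[OF g] finq by (intro card_mono) simp_all
  also have "\<dots> \<le> card (Av H p q) + card (?Nq - {p})" by (rule card_Un_le)
  finally have c1: "card (?Np - {q}) \<le> card (Av H p q) + card (?Nq - {p})" .
  have c2: "q \<in> ?Np \<longleftrightarrow> p \<in> ?Nq" by (simp add: insert_commute)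
  have c3: "p \<in> ?Nq \<Longrightarrow> card ?Nq > 0" using finq card_gt_0_iff by blast
  have c4: "q \<in> ?Np \<Longrightarrow> card ?Np > 0" using finp card_gt_0_iff by blast
  show ?thesis
  proof (cases "p \<in> ?Nq")
    case True
    then show ?thesis using c1 c2 c3 c4 finp finq by (simp add: card_Diff_singleton_if degree_nbr[OF g])
  next
    case False
    then show ?thesis using c1 c2 finp finq by (simp add: card_Diff_singleton_if degree_nbr[OF g])
  qed
qed

lemma move_step:
  assumes g: "simple_graph V H" and px: "{p,x} \<in> H" and qx: "{q,x} \<notin> H" and xq: "x \<noteq> q" and "p \<noteq> q"
    and q: "q \<in> V"
  defines "H' \<equiv> insert {q,x} (H - {{p,x}})"
  shows "simple_graph V H'"
    and "degree H' v = (if v \<in> {q,x} then 1 else 0) + (degree H v - (if v \<in> {p,x} then 1 else 0))"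
    and "degree H v \<ge> (if v \<in> {p,x} then 1 else 0)"
    and "(q \<in> S \<longrightarrow> p \<in> S) \<and> (p \<in> T \<longrightarrow> q \<in> T) \<Longrightarrow> card (cntset H' S T) \<le> card (cntset H S T)"
proof -
  have xV: "x \<in> V" "x \<noteq> p" using edge_ne[OF g px] by auto
  show "simple_graph V H'" unfolding simple_graph_def
  proof (intro conjI ballI)
    show "finite V" using g unfolding simple_graph_def by simp
    fix e assume "e \<in> H'"
    then have "e = {q,x} \<or> e \<in> H" unfolding H'_def by blast
    then show "\<exists>u w. u \<in> V \<and> w \<in> V \<and> u \<noteq> w \<and> e = {u,w}"
    proof
      assume "e = {q,x}" then show ?thesis using q xV xq by blast
    next
      assume "e \<in> H" then show ?thesis using g unfolding simple_graph_def by blast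
    qed
  qed
  have fin: "finite H" using finite_E[OF g] .
  let ?A = "{e\<in>H. v \<in> e}"
  have finA: "finite ?A" using fin by simp
  have eq: "{e\<in>H'. v \<in> e} = (if v \<in> {q,x} then insert {q,x} (?A - {{p,x}}) else ?A - {{p,x}})"
    unfolding H'_def by auto
  have inA: "{p,x} \<in> ?A \<longleftrightarrow> v \<in> {p,x}" using px by auto
  have nq: "{q,x} \<notin> ?A - {{p,x}}" using qx by auto
  have cA: "card (?A - {{p,x}}) = card ?A - (if v \<in> {p,x} then 1 else 0)"
    using inA finA by (simp add: card_Diff_singleton_if)
  show "degree H' v = (if v \<in> {q,x} then 1 else 0) + (degree H v - (if v \<in> {p,x} then 1 else 0))"
  proof (cases "v \<in> {q,x}")
    case True
    then show ?thesis unfolding degree_def eq using finA nq cA by simp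
  next
    case False
    then show ?thesis unfolding degree_def eq using cA by simp
  qed
  show "degree H v \<ge> (if v \<in> {p,x} then 1 else 0)"
  proof (cases "v \<in> {p,x}")
    case True
    then have "?A \<noteq> {}" using inA by blast
    then show ?thesis unfolding degree_def using finA True by (simp add: card_gt_0_iff Suc_le_eq)
  qed simp
  assume r: "(q \<in> S \<longrightarrow> p \<in> S) \<and> (p \<in> T \<longrightarrow> q \<in> T)"
  let ?C = "cntset H S T"
  have finC: "finite ?C" using fin unfolding cntset_def by simp
  show "card (cntset H' S T) \<le> card ?C"
  proof (cases "{q,x} \<inter> S \<noteq> {} \<and> {q,x} \<inter> T = {}")
    case True
    then have inC: "{p,x} \<in> ?C" using r px unfolding cntset_def by auto
    have "cntset H' S T \<subseteq> insert {q,x} (?C - {{p,x}})" unfolding H'_def cntset_def by auto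
    then have "card (cntset H' S T) \<le> card (insert {q,x} (?C - {{p,x}}))"
      using finC by (intro card_mono) simp_all
    also have "\<dots> \<le> Suc (card (?C - {{p,x}}))" using finC by (simp add: card_insert_if)
    also have "\<dots> = card ?C" using inC finC
      by (simp add: card_Diff_singleton) (metis card_0_eq empty_iff Suc_pred neq0_conv)
    finally show ?thesis .
  next
    case False
    then have "cntset H' S T \<subseteq> ?C" unfolding H'_def cntset_def by auto
    then show ?thesis using finC card_mono by blast
  qed
qed


lemma shift_k:
  "simple_graph V H \<Longrightarrow> p \<in> V \<Longrightarrow> q \<in> V \<Longrightarrow> p \<noteq> q \<Longrightarrow> k \<le> card (Av H p q)
   \<Longrightarrow> (q \<in> S \<longrightarrow> p \<in> S) \<and> (p \<in> T \<longrightarrow> q \<in> T)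
   \<Longrightarrow> \<exists>H'. simple_graph V H' \<and> degree H' p = degree H p - k \<and> degree H' q = degree H q + k \<and>
        (\<forall>v. v \<noteq> p \<longrightarrow> v \<noteq> q \<longrightarrow> degree H' v = degree H v) \<and>
        card (cntset H' S T) \<le> card (cntset H S T)"
proof (induction k arbitrary: H)
  case 0
  then show ?case by auto
next
  case (Suc k)
  then have "Av H p q \<noteq> {}" by auto
  then obtain x where "x \<in> Av H p q" by blast
  then have x: "{p,x} \<in> H" "{q,x} \<notin> H" "x \<noteq> q" unfolding Av_def by auto
  define H1 where "H1 = insert {q,x} (H - {{p,x}})"
  note m = move_step[OF Suc.prems(1) x Suc.prems(4) Suc.prems(3), folded H1_def]
  have xp: "x \<noteq> p" using edge_ne[OF Suc.prems(1) x(1)] by auto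
  have dp: "degree H1 p = degree H p - 1" using m(2)[of p] Suc.prems(4) xp by simp
  have dp1: "degree H p \<ge> 1" using m(3)[of p] by simp
  have dq: "degree H1 q = degree H q + 1" using m(2)[of q] Suc.prems(4) x(3) by simp
  have dv: "degree H1 v = degree H v" if "v \<noteq> p" "v \<noteq> q" for v
  proof (cases "v = x")
    case True
    then show ?thesis using m(2)[of v] m(3)[of v] that by simp
  next
    case False
    then show ?thesis using m(2)[of v] that by simp
  qed
  have sub: "Av H p q - {x} \<subseteq> Av H1 p q"
  proof
    fix y assume y: "y \<in> Av H p q - {x}"
    then have "{p,y} \<in> H" "{q,y} \<notin> H" "y \<noteq> q" "y \<noteq> x" unfolding Av_def by auto
    moreover have "{p,y} \<noteq> {p,x}" "{p,y} \<noteq> {q,x}" "{q,y} \<noteq> {q,x}"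
      using \<open>y \<noteq> x\<close> xp Suc.prems(4) by (auto simp: doubleton_eq_iff)
    ultimately show "y \<in> Av H1 p q" unfolding Av_def H1_def by auto
  qed
  have "card (Av H p q - {x}) \<le> card (Av H1 p q)"
    using sub Av_finite[OF m(1)] by (rule card_mono[rotated])
  moreover have "card (Av H p q - {x}) = card (Av H p q) - 1"
    using \<open>x \<in> Av H p q\<close> Av_finite[OF Suc.prems(1)] by simp
  ultimately have "k \<le> card (Av H1 p q)" using Suc.prems(5) by simp
  from Suc.IH[OF m(1) Suc.prems(2,3,4) this Suc.prems(6)] obtain H' where
    H': "simple_graph V H'" "degree H' p = degree H1 p - k" "degree H' q = degree H1 q + k"
        "\<forall>v. v \<noteq> p \<longrightarrow> v \<noteq> q \<longrightarrow> degree H' v = degree H1 v"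
        "card (cntset H' S T) \<le> card (cntset H1 S T)" by blast
  show ?case
    apply (rule exI[of _ H'])
    using H' dp dp1 dq dv m(4)[OF Suc.prems(6)] by auto
qed

lemma sw_a[simp]: "sw a b a = b" and sw_b[simp]: "sw a b b = a"
  by (auto simp: sw_def)

lemma sum_sw_cases:
  fixes f :: "'a \<Rightarrow> int"
  assumes "finite A" "a \<noteq> b"
  shows "(\<Sum>x\<in>A. f (sw a b x)) = (\<Sum>x\<in>A. f x) +
     (if a \<in> A \<and> b \<notin> A then f b - f a else if b \<in> A \<and> a \<notin> A then f a - f b else 0)"
proof -
  consider "a \<in> A" "b \<notin> A" | "b \<in> A" "a \<notin> A" | "a \<in> A" "b \<in> A" | "a \<notin> A" "b \<notin> A" by blast
  then show ?thesis
  proof cases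
    case 1
    have "(\<Sum>x\<in>A. f (sw a b x)) = f b + (\<Sum>x\<in>A-{a}. f (sw a b x))"
      using 1 assms by (simp add: sum.remove)
    also have "(\<Sum>x\<in>A-{a}. f (sw a b x)) = (\<Sum>x\<in>A-{a}. f x)"
      using 1 by (intro sum.cong) (auto simp: sw_def)
    also have "(\<Sum>x\<in>A. f x) = f a + (\<Sum>x\<in>A-{a}. f x)" using 1 assms by (simp add: sum.remove)
    ultimately show ?thesis using 1 by simp
  next
    case 2
    have "(\<Sum>x\<in>A. f (sw a b x)) = f a + (\<Sum>x\<in>A-{b}. f (sw a b x))"
      using 2 assms by (simp add: sum.remove)
    also have "(\<Sum>x\<in>A-{b}. f (sw a b x)) = (\<Sum>x\<in>A-{b}. f x)"
      using 2 by (intro sum.cong) (auto simp: sw_def)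
    also have "(\<Sum>x\<in>A. f x) = f b + (\<Sum>x\<in>A-{b}. f x)" using 2 assms by (simp add: sum.remove)
    ultimately show ?thesis using 2 by simp
  next
    case 3
    have "sw a b ` A = A" using 3 by (rule sw_image_V)
    then have "(\<Sum>x\<in>A. f x) = (\<Sum>x\<in>sw a b ` A. f x)" by simp
    also have "\<dots> = (\<Sum>x\<in>A. f (sw a b x))"
      by (simp add: sum.reindex inj_on_def inj_eq[OF inj_sw])
    finally show ?thesis using 3 by simp
  next
    case 4
    have "(\<Sum>x\<in>A. f (sw a b x)) = (\<Sum>x\<in>A. f x)"
      using 4 by (intro sum.cong) (auto simp: sw_def)
    then show ?thesis using 4 by simp
  qed
qed


theorem lemma15:
  fixes V :: "'a set" and E :: "'a set set" and S T :: "'a set"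
  assumes "simple_graph V E"
    and "S \<subseteq> V" and "T \<subseteq> V" and "S \<inter> T = {}"
  shows "\<exists>E' S' T'. simple_graph V E' \<and> (\<forall>v\<in>V. degree E' v = degree E v) \<and>
     S' \<subseteq> V \<and> T' \<subseteq> V \<and> S' \<inter> T' = {} \<and> card S' = card S \<and> card T' = card T \<and>
     (\<forall>s\<in>S'. \<forall>v\<in>V - S'. degree E' s \<le> degree E' v) \<and>
     (\<forall>t\<in>T'. \<forall>v\<in>V - T'. degree E' t \<ge> degree E' v) \<and>
     card (edges_ST V E' S' T') \<le> card (edges_ST V E S T)"
proof -
  let ?G = ?thesis
  have finV: "finite V" using assms(1) unfolding simple_graph_def by blast
  define valid where "valid E' S' T' \<longleftrightarrow> simple_graph V E' \<and> (\<forall>v\<in>V. degree E' v = degree E v) \<and>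
     S' \<subseteq> V \<and> T' \<subseteq> V \<and> S' \<inter> T' = {} \<and> card S' = card S \<and> card T' = card T \<and>
     card (edges_ST V E' S' T') \<le> card (edges_ST V E S T)" for E' S' T'
  define mu where "mu S' T' = (\<Sum>x\<in>S'. degree E x) + (\<Sum>x\<in>V-T'. degree E x)" for S' T'
  have step: "\<exists>E'' S'' T''. valid E'' S'' T'' \<and> mu S'' T'' < mu S' T'"
    if v: "valid E' S' T'" and ab: "a \<in> V" "b \<in> V" "a \<noteq> b" and lt: "degree E b < degree E a"
      and r1: "b \<in> S' \<longrightarrow> a \<in> S'" and r2: "a \<in> T' \<longrightarrow> b \<in> T'"
      and strict: "(a \<in> S' \<and> b \<notin> S') \<or> (b \<in> T' \<and> a \<notin> T')" for E' S' T' a b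
  proof -
    let ?s = "sw a b"
    define H where "H = (`) ?s ` E'"
    define S2 where "S2 = ?s ` S'"
    define T2 where "T2 = ?s ` T'"
    have g': "simple_graph V E'" and deg': "\<forall>v\<in>V. degree E' v = degree E v"
      and sub: "S' \<subseteq> V" "T' \<subseteq> V" and dis: "S' \<inter> T' = {}" and cS: "card S' = card S"
      and cT: "card T' = card T" and cnt: "card (edges_ST V E' S' T') \<le> card (edges_ST V E S T)"
      using v unfolding valid_def by auto
    have gH: "simple_graph V H" unfolding H_def by (rule relabel_graph[OF g' ab(1,2)])
    have swV: "v \<in> V \<Longrightarrow> ?s v \<in> V" for v using ab by (auto simp: sw_def)
    have degH: "v \<in> V \<Longrightarrow> degree H v = degree E (?s v)" for v
      unfolding H_def relabel_degree using deg' swV by simp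
    have role: "(a \<in> S2 \<longrightarrow> b \<in> S2) \<and> (b \<in> T2 \<longrightarrow> a \<in> T2)"
      unfolding S2_def T2_def mem_sw_image using r1 r2 by simp
    have img_mem: "y \<in> (`) ?s ` E' \<longleftrightarrow> ?s ` y \<in> E'" for y
    proof
      assume "y \<in> (`) ?s ` E'"
      then obtain e where "e \<in> E'" "y = ?s ` e" by blast
      then show "?s ` y \<in> E'" by (simp add: image_image)
    next
      assume "?s ` y \<in> E'"
      then have "?s ` (?s ` y) \<in> (`) ?s ` E'" by blast
      then show "y \<in> (`) ?s ` E'" by (simp add: image_image)
    qed
    have AvH: "Av H b a = ?s ` Av E' a b"
    proof -
      have "x \<in> Av H b a \<longleftrightarrow> ?s x \<in> Av E' a b" for x
      proof -
        have "?s x \<noteq> b \<longleftrightarrow> x \<noteq> a" by (metis sw_sw sw_a)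
        then show ?thesis unfolding Av_def H_def img_mem by (simp add: insert_commute)
      qed
      then show ?thesis unfolding mem_sw_image[symmetric] by blast
    qed
    have "card (Av H b a) = card (Av E' a b)" unfolding AvH
      by (simp add: card_image inj_on_def inj_eq[OF inj_sw])
    then have "degree E a - degree E b \<le> card (Av H b a)"
      using av_card[OF g' ab(3)] deg' ab(1,2) by simp
    from shift_k[OF gH ab(2) ab(1) ab(3)[symmetric] this role] obtain H' where
      H': "simple_graph V H'" "degree H' b = degree H b - (degree E a - degree E b)"
       "degree H' a = degree H a + (degree E a - degree E b)"
       "\<forall>v. v \<noteq> b \<longrightarrow> v \<noteq> a \<longrightarrow> degree H' v = degree H v"
       "card (cntset H' S2 T2) \<le> card (cntset H S2 T2)" by blast
    have degH': "\<forall>v\<in>V. degree H' v = degree E v"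
    proof
      fix v assume "v \<in> V"
      then show "degree H' v = degree E v"
        using H'(2,3,4) degH[OF ab(1)] degH[OF ab(2)] degH[OF \<open>v \<in> V\<close>] lt
        by (cases "v = a"; cases "v = b") (auto simp: sw_def)
    qed
    have dis2: "S2 \<inter> T2 = {}" unfolding S2_def T2_def using dis by (simp add: image_Int[OF inj_sw, symmetric])
    have sub2: "S2 \<subseteq> V" "T2 \<subseteq> V" unfolding S2_def T2_def using sub swV by auto
    have card2: "card S2 = card S'" "card T2 = card T'" unfolding S2_def T2_def
      by (simp_all add: card_image inj_on_def inj_eq[OF inj_sw])
    have "card (edges_ST V H' S2 T2) = card (cntset H' S2 T2)" using edges_ST_eq[OF H'(1) dis2] by simp
    also have "\<dots> \<le> card (cntset H S2 T2)" by (rule H'(5))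
    also have "\<dots> = card (cntset E' S' T')" unfolding H_def S2_def T2_def by (rule relabel_cnt)
    also have "\<dots> = card (edges_ST V E' S' T')" using edges_ST_eq[OF g' dis] by simp
    finally have cnt2: "card (edges_ST V H' S2 T2) \<le> card (edges_ST V E S T)" using cnt by simp
    have valid2: "valid H' S2 T2" unfolding valid_def using H'(1) degH' sub2 dis2 card2 cS cT cnt2 by simp
    define f :: "'a \<Rightarrow> int" where "f x = int (degree E x)" for x
    have VT: "V - T2 = ?s ` (V - T')" unfolding T2_def
      by (simp add: image_set_diff[OF inj_sw] sw_image_V[OF ab(1,2)])
    have reidx: "(\<Sum>x\<in>?s ` A. f x) = (\<Sum>x\<in>A. f (?s x))" for A
      by (simp add: sum.reindex inj_on_def inj_eq[OF inj_sw])
    have finS: "finite S'" "finite (V - T')" using sub finV finite_subset by auto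
    have "int (mu S2 T2) = (\<Sum>x\<in>S2. f x) + (\<Sum>x\<in>V-T2. f x)" unfolding mu_def f_def by simp
    also have "\<dots> = (\<Sum>x\<in>S'. f (?s x)) + (\<Sum>x\<in>V-T'. f (?s x))" unfolding VT S2_def reidx ..
    also have "\<dots> < (\<Sum>x\<in>S'. f x) + (\<Sum>x\<in>V-T'. f x)"
      unfolding sum_sw_cases[OF finS(1) ab(3)] sum_sw_cases[OF finS(2) ab(3)]
      using lt r1 r2 strict ab unfolding f_def by auto
    also have "\<dots> = int (mu S' T')" unfolding mu_def f_def by simp
    finally show ?thesis using valid2 by auto
  qed
  have main: "\<forall>E' S' T'. valid E' S' T' \<longrightarrow> mu S' T' = n \<longrightarrow> ?G" for n
  proof (induction n rule: less_induct)
    case (less n)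
    show ?case
    proof (intro allI impI)
      fix E' S' T' assume v: "valid E' S' T'" and mn: "mu S' T' = n"
      have deg': "\<forall>v\<in>V. degree E' v = degree E v" and sub: "S' \<subseteq> V" "T' \<subseteq> V"
        and dis: "S' \<inter> T' = {}" using v unfolding valid_def by auto
      show ?G
      proof (cases "(\<forall>s\<in>S'. \<forall>v\<in>V - S'. degree E' s \<le> degree E' v) \<and>
                    (\<forall>t\<in>T'. \<forall>v\<in>V - T'. degree E' t \<ge> degree E' v)")
        case True
        then show ?G using v unfolding valid_def by blast
      next
        case False
        then obtain a b where ab: "a \<in> V" "b \<in> V" "a \<noteq> b" "degree E b < degree E a"
          "b \<in> S' \<longrightarrow> a \<in> S'" "a \<in> T' \<longrightarrow> b \<in> T'" "(a \<in> S' \<and> b \<notin> S') \<or> (b \<in> T' \<and> a \<notin> T')"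
        proof -
          assume h: "\<And>a b. a \<in> V \<Longrightarrow> b \<in> V \<Longrightarrow> a \<noteq> b \<Longrightarrow> degree E b < degree E a \<Longrightarrow>
            (b \<in> S' \<longrightarrow> a \<in> S') \<Longrightarrow> (a \<in> T' \<longrightarrow> b \<in> T') \<Longrightarrow> (a \<in> S' \<and> b \<notin> S') \<or> (b \<in> T' \<and> a \<notin> T') \<Longrightarrow> thesis"
          from False have "\<not> (\<forall>s\<in>S'. \<forall>v\<in>V - S'. degree E' s \<le> degree E' v) \<or>
                    \<not> (\<forall>t\<in>T'. \<forall>v\<in>V - T'. degree E' t \<ge> degree E' v)" by blast
          then show thesis
          proof
            assume "\<not> (\<forall>s\<in>S'. \<forall>v\<in>V - S'. degree E' s \<le> degree E' v)"
            then obtain s w where "s \<in> S'" "w \<in> V - S'" "degree E' w < degree E' s" by force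
            moreover have "s \<in> V" using \<open>s \<in> S'\<close> sub by blast
            moreover have "s \<notin> T'" using \<open>s \<in> S'\<close> dis by blast
            ultimately show thesis using h[of s w] deg' by auto
          next
            assume "\<not> (\<forall>t\<in>T'. \<forall>v\<in>V - T'. degree E' t \<ge> degree E' v)"
            then obtain t w where "t \<in> T'" "w \<in> V - T'" "degree E' t < degree E' w" by force
            moreover have "t \<in> V" using \<open>t \<in> T'\<close> sub by blast
            moreover have "t \<notin> S'" using \<open>t \<in> T'\<close> dis by blast
            ultimately show thesis using h[of w t] deg' by auto
          qed
        qed
        from step[OF v ab] obtain E'' S'' T'' where v2: "valid E'' S'' T''" and lt2: "mu S'' T'' < mu S' T'" by blast
        have "mu S'' T'' < n" using lt2 mn by simp
        from less.IH[OF this] v2 show ?G by blast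
      qed
    qed
  qed
  have "valid E S T" unfolding valid_def using assms by simp
  then show ?thesis using main by blast
qed

end
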